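(* Let $(\mathcal{S},\mathcal{A},P,r)$ be an MDP with finite state and action spaces and $r\in[0,1]$, and let $\widehat P$ be the empirical kernel formed from $n$ i.i.d. samples $S^1_{s,a},\dots,S^n_{s,a}\sim P(\cdot\mid s,a)$ for each $(s,a)$. Fix $\gamma\in(0,1)$, $M>0$ and $s\in\mathcal{S}$. For $u\in[0,1]$, let $\widehat V^{(s,u)}_{\gamma,M}$ be the unique fixed point of $\mathrm{Clip}_M\circ\widehat{\mathcal{T}}^{(s,u)}_\gamma$ and let $\widehat V^\star_{\gamma,M}$ be the unique fixed point of $\mathrm{Clip}_M\circ\widehat{\mathcal{T}}_\gamma$. Then: (i) for any $u,u'\in[0,1]$, $\|\widehat V^{(s,u)}_{\gamma,M}-\widehat V^{(s,u')}_{\gamma,M}\|_\infty\le\frac{|u-u'|}{1-\gamma}$; (ii) with $u^\star(s)=\widehat{\mathcal{T}}_\gamma(\widehat V^\star_{\gamma,M})(s)-\gamma\widehat V^\star_{\gamma,M}(s)$, we have $u^\star(s)\in[0,1]$ and $\widehat V^{(s,u^\star(s))}_{\gamma,M}=\widehat V^\star_{\gamma,M}$; (iii) for any $\varepsilon>0$ there is a finite set $U\subset[0,1]$ with $|U|=\lceil\frac1{2(1-\gamma)\varepsilon}\rceil$ such that almost surely, for every $s\in\mathcal{S}$ there exists $u\in U$ with $\|\widehat V^\star_{\gamma,M}-\widehat V^{(s,u)}_{\gamma,M}\|_\infty\le\varepsilon$; (iv) for any $u\in[0,1]$ and $a\in\mathcal{A}$, $\widehat V^{(s,u)}_{\gamma,M}$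 is independent of the samples $S^1_{s,a},\dots,S^n_{s,a}$.
   Context: $\widehat{\mathcal{T}}_\gamma(x)(s')=\max_a\big(r(s',a)+\gamma\sum_{s''}\widehat P(s''\mid s',a)x(s'')\big)$. $\widehat P^{(s)}$ equals $\widehat P$ except that $s$ is absorbing: $\widehat P^{(s)}(\cdot\mid s'',a)=\widehat P(\cdot\mid s'',a)$ for $s''\ne s$ and $\widehat P^{(s)}(s\mid s,a)=1$. $r^{(s,u)}$ equals $r$ except $r^{(s,u)}(s,a)=u$ for all $a$. $\widehat{\mathcal{T}}^{(s,u)}_\gamma(x)(s')=\max_a\big(r^{(s,u)}(s',a)+\gamma\sum_{s''}\widehat P^{(s)}(s''\mid s',a)x(s'')\big)$. $\mathrm{Clip}_M(V)=\min\{V,(M+\min_{s'}V(s'))\mathbf 1\}$ elementwise; $\mathrm{Clip}_M$ composed with a $\gamma$-discounted Bellman operator is a $\gamma$-contraction in $\|\cdot\|_\infty$, so these fixed points exist and are unique. *)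

theory Defs
  imports "HOL-Probability.Probability"
begin

text \<open>Sample functions: omega (s,a,i) is the i-th sample drawn from P(.|s,a), i < n.\<close>

definition emp_kernel :: "nat \<Rightarrow> ('s \<times> 'a \<times> nat \<Rightarrow> 's) \<Rightarrow> 's \<Rightarrow> 'a \<Rightarrow> 's \<Rightarrow> real" where
  "emp_kernel n \<omega> s a s' = real (card {i. i < n \<and> \<omega> (s, a, i) = s'}) / real n"

definition samples_pmf :: "nat \<Rightarrow> ('s::finite \<Rightarrow> 'a::finite \<Rightarrow> 's pmf) \<Rightarrow> ('s \<times> 'a \<times> nat \<Rightarrow> 's) pmf" where
  "samples_pmf n P = Pi_pmf {(s, a, i). i < n} undefined (\<lambda>(s, a, i). P s a)"

definition bellman :: "('s::finite \<Rightarrow> 'a::finite \<Rightarrow> real) \<Rightarrow> ('s \<Rightarrow> 'a \<Rightarrow> 's \<Rightarrow> real) \<Rightarrow> real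
    \<Rightarrow> ('s \<Rightarrow> real) \<Rightarrow> 's \<Rightarrow> real" where
  "bellman r Q \<gamma> x s' = (MAX a. r s' a + \<gamma> * (\<Sum>s''\<in>UNIV. Q s' a s'' * x s''))"

definition absorb_kernel :: "('s \<Rightarrow> 'a \<Rightarrow> 's \<Rightarrow> real) \<Rightarrow> 's \<Rightarrow> 's \<Rightarrow> 'a \<Rightarrow> 's \<Rightarrow> real" where
  "absorb_kernel Q s = (\<lambda>s'' a t. if s'' = s then (if t = s then 1 else 0) else Q s'' a t)"

definition mod_reward :: "('s \<Rightarrow> 'a \<Rightarrow> real) \<Rightarrow> 's \<Rightarrow> real \<Rightarrow> 's \<Rightarrow> 'a \<Rightarrow> real" where
  "mod_reward r s u = (\<lambda>s' a. if s' = s then u else r s' a)"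

definition clip :: "real \<Rightarrow> ('s::finite \<Rightarrow> real) \<Rightarrow> 's \<Rightarrow> real" where
  "clip M V = (\<lambda>s'. min (V s') (M + (MIN t. V t)))"

definition clipped_fix :: "real \<Rightarrow> (('s::finite \<Rightarrow> real) \<Rightarrow> ('s \<Rightarrow> real)) \<Rightarrow> 's \<Rightarrow> real" where
  "clipped_fix M T = (THE V. clip M (T V) = V)"

definition supnorm :: "('s::finite \<Rightarrow> real) \<Rightarrow> real" where
  "supnorm f = (MAX x. \<bar>f x\<bar>)"

definition V_su :: "nat \<Rightarrow> ('s::finite \<Rightarrow> 'a::finite \<Rightarrow> real) \<Rightarrow> real \<Rightarrow> real
    \<Rightarrow> ('s \<times> 'a \<times> nat \<Rightarrow> 's) \<Rightarrow> 's \<Rightarrow> real \<Rightarrow> 's \<Rightarrow> real" where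
  "V_su n r \<gamma> M \<omega> s u =
     clipped_fix M (bellman (mod_reward r s u) (absorb_kernel (emp_kernel n \<omega>) s) \<gamma>)"

definition V_star :: "nat \<Rightarrow> ('s::finite \<Rightarrow> 'a::finite \<Rightarrow> real) \<Rightarrow> real \<Rightarrow> real
    \<Rightarrow> ('s \<times> 'a \<times> nat \<Rightarrow> 's) \<Rightarrow> 's \<Rightarrow> real" where
  "V_star n r \<gamma> M \<omega> = clipped_fix M (bellman r (emp_kernel n \<omega>) \<gamma>)"

end

theory Submission
  imports Defs
begin

lemma supnorm_ge: "\<bar>f x\<bar> \<le> supnorm f"
  unfolding supnorm_def by (rule Max_ge) auto

lemma supnorm_le: "(\<And>x. \<bar>f x\<bar> \<le> c) \<Longrightarrow> supnorm f \<le> c"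
  unfolding supnorm_def by (subst Max_le_iff) auto

lemma supnorm_nonneg: "0 \<le> supnorm f"
  using supnorm_ge[of f undefined] by linarith

lemma supnorm_le_sum: "supnorm f \<le> (\<Sum>t\<in>UNIV. \<bar>f t\<bar>)"
  by (rule supnorm_le) (rule member_le_sum, auto)

lemma Max_diff_le:
  fixes f g :: "'a::finite \<Rightarrow> real"
  assumes "\<And>a. \<bar>f a - g a\<bar> \<le> c"
  shows "\<bar>(MAX a. f a) - (MAX a. g a)\<bar> \<le> c"
proof -
  have "Max (range f) \<in> range f" "Max (range g) \<in> range g" by (auto intro!: Max_in)
  then obtain a b where a: "(MAX a. f a) = f a" and b: "(MAX a. g a) = g b" by (metis imageE)
  have "g a \<le> (MAX a. g a)" "f b \<le> (MAX a. f a)" by (auto intro: Max_ge)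
  then show ?thesis using assms[of a] assms[of b] a b by linarith
qed

lemma Min_diff_le:
  fixes f g :: "'a::finite \<Rightarrow> real"
  assumes "\<And>a. \<bar>f a - g a\<bar> \<le> c"
  shows "\<bar>(MIN a. f a) - (MIN a. g a)\<bar> \<le> c"
proof -
  have "Min (range f) \<in> range f" "Min (range g) \<in> range g" by (auto intro!: Min_in)
  then obtain a b where a: "(MIN a. f a) = f a" and b: "(MIN a. g a) = g b" by (metis imageE)
  have "(MIN a. g a) \<le> g a" "(MIN a. f a) \<le> f b" by (auto intro: Min_le)
  then show ?thesis using assms[of a] assms[of b] a b by linarith
qed

lemma contraction_unique:
  fixes F :: "('s::finite \<Rightarrow> real) \<Rightarrow> 's \<Rightarrow> real"
  assumes g: "0 \<le> \<gamma>" "\<gamma> < 1"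
  and c: "\<And>x y t. \<bar>F x t - F y t\<bar> \<le> \<gamma> * supnorm (\<lambda>t. x t - y t)"
  and V: "F V = V" and W: "F W = W"
  shows "V = W"
proof -
  let ?S = "supnorm (\<lambda>t. V t - W t)"
  have "?S \<le> \<gamma> * ?S"
    by (rule supnorm_le) (metis c V W)
  then have "(1 - \<gamma>) * ?S \<le> 0" by (simp add: algebra_simps)
  then have "?S \<le> 0" using g by (simp add: mult_le_0_iff)
  show ?thesis
  proof
    fix t show "V t = W t" using supnorm_ge[of "\<lambda>t. V t - W t" t] \<open>?S \<le> 0\<close> by linarith
  qed
qed

lemma contraction_exists:
  fixes F :: "('s::finite \<Rightarrow> real) \<Rightarrow> 's \<Rightarrow> real"
  assumes g: "0 \<le> \<gamma>" "\<gamma> < 1"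
  and c: "\<And>x y t. \<bar>F x t - F y t\<bar> \<le> \<gamma> * supnorm (\<lambda>t. x t - y t)"
  shows "\<exists>V. F V = V"
proof -
  define x where "x k = (F ^^ k) (\<lambda>_. 0)" for k
  define d0 where "d0 = supnorm (\<lambda>t. x 1 t - x 0 t)"
  have xs: "x (Suc k) = F (x k)" for k by (simp add: x_def)
  have step: "supnorm (\<lambda>t. x (Suc k) t - x k t) \<le> \<gamma> ^ k * d0" for k
  proof (induction k)
    case 0 then show ?case by (simp add: d0_def)
  next
    case (Suc k)
    have "supnorm (\<lambda>t. x (Suc (Suc k)) t - x (Suc k) t) \<le> \<gamma> * supnorm (\<lambda>t. x (Suc k) t - x k t)"
      by (rule supnorm_le) (simp only: xs c)
    also have "\<dots> \<le> \<gamma> * (\<gamma> ^ k * d0)" using Suc g by (simp add: mult_left_mono)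
    finally show ?case by simp
  qed
  define \<delta> where "\<delta> t j = x (Suc j) t - x j t" for t j
  have dle: "\<bar>\<delta> t j\<bar> \<le> \<gamma> ^ j * d0" for t j
    using supnorm_ge[of "\<lambda>t. x (Suc j) t - x j t" t] step[of j] by (simp add: \<delta>_def)
  have sg: "summable (\<lambda>j. \<gamma> ^ j * d0)"
    using g by (intro summable_mult2 summable_geometric) auto
  have sd: "summable (\<delta> t)" for t
    by (rule summable_comparison_test[OF _ sg]) (use dle in auto)
  define L where "L t = x 0 t + suminf (\<delta> t)" for t
  have xsum: "x k t = x 0 t + (\<Sum>j<k. \<delta> t j)" for k t
    unfolding \<delta>_def by (subst sum_lessThan_telescope) simp
  have conv: "(\<lambda>k. x k t) \<longlonglongrightarrow> L t" for t
  proof -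
    have e: "(\<lambda>k. x k t) = (\<lambda>k. x 0 t + (\<Sum>j<k. \<delta> t j))" by (rule ext, rule xsum)
    show ?thesis unfolding e L_def by (intro tendsto_add tendsto_const summable_LIMSEQ sd)
  qed
  have sconv: "(\<lambda>k. supnorm (\<lambda>t. x k t - L t)) \<longlonglongrightarrow> 0"
  proof (rule Lim_null_comparison)
    show "\<forall>\<^sub>F k in sequentially. norm (supnorm (\<lambda>t. x k t - L t)) \<le> (\<Sum>t\<in>UNIV. \<bar>x k t - L t\<bar>)"
    proof (intro always_eventually allI)
      fix k show "norm (supnorm (\<lambda>t. x k t - L t)) \<le> (\<Sum>t\<in>UNIV. \<bar>x k t - L t\<bar>)"
        using supnorm_le_sum[of "\<lambda>t. x k t - L t"] supnorm_nonneg[of "\<lambda>t. x k t - L t"] by simp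
    qed
    have "(\<lambda>k. (\<Sum>t\<in>UNIV. \<bar>x k t - L t\<bar>)) \<longlonglongrightarrow> (\<Sum>t\<in>(UNIV::'s set). \<bar>L t - L t\<bar>)"
      by (intro tendsto_sum tendsto_rabs tendsto_diff conv tendsto_const)
    then show "(\<lambda>k. (\<Sum>t\<in>UNIV. \<bar>x k t - L t\<bar>)) \<longlonglongrightarrow> 0" by simp
  qed
  have "F L t = L t" for t
  proof -
    have "(\<lambda>k. F (x k) t - F L t) \<longlonglongrightarrow> 0"
    proof (rule Lim_null_comparison)
      show "\<forall>\<^sub>F k in sequentially. norm (F (x k) t - F L t) \<le> \<gamma> * supnorm (\<lambda>t. x k t - L t)"
        using c by simp
      show "(\<lambda>k. \<gamma> * supnorm (\<lambda>t. x k t - L t)) \<longlonglongrightarrow> 0"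
        using tendsto_mult_right_zero[OF sconv] by simp
    qed
    then have "(\<lambda>k. F (x k) t) \<longlonglongrightarrow> F L t"
      by (simp add: LIM_zero_iff)
    moreover have "(\<lambda>k. F (x k) t) \<longlonglongrightarrow> L t"
      using LIMSEQ_Suc[OF conv[of t]] by (simp add: xs)
    ultimately show ?thesis by (rule LIMSEQ_unique)
  qed
  then show ?thesis by blast
qed

definition stoch :: "('s::finite \<Rightarrow> 'a::finite \<Rightarrow> 's \<Rightarrow> real) \<Rightarrow> bool" where
  "stoch Q \<longleftrightarrow> (\<forall>t a t'. 0 \<le> Q t a t') \<and> (\<forall>t a. (\<Sum>t'\<in>UNIV. Q t a t') = 1)"

lemma card_fibers:
  fixes f :: "nat \<Rightarrow> 's::finite"
  shows "(\<Sum>t'\<in>UNIV. card {i. i < n \<and> f i = t'}) = n"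
proof -
  have "(\<Sum>t'\<in>UNIV. card {i. i < n \<and> f i = t'}) = (\<Sum>t'\<in>UNIV. \<Sum>i<n. if f i = t' then 1 else 0)"
  proof (rule sum.cong[OF refl])
    fix t'
    have "{i. i < n \<and> f i = t'} = {i\<in>{..<n}. f i = t'}" by auto
    then show "card {i. i < n \<and> f i = t'} = (\<Sum>i<n. if f i = t' then 1 else 0)"
      by (simp add: sum.inter_filter[symmetric])
  qed
  also have "\<dots> = (\<Sum>i<n. \<Sum>t'\<in>UNIV. if f i = t' then 1 else 0)" by (rule sum.swap)
  also have "\<dots> = n" by simp
  finally show ?thesis .
qed

lemma stoch_emp: "n > 0 \<Longrightarrow> stoch (emp_kernel n \<omega>)"
proof -
  assume n: "n > 0"
  have "(\<Sum>t'\<in>UNIV. emp_kernel n \<omega> t a t') = 1" for t a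
  proof -
    have "(\<Sum>t'\<in>UNIV. emp_kernel n \<omega> t a t') = (\<Sum>t'\<in>UNIV. real (card {i. i < n \<and> \<omega> (t, a, i) = t'})) / real n"
      unfolding emp_kernel_def by (simp add: sum_divide_distrib)
    also have "(\<Sum>t'\<in>UNIV. real (card {i. i < n \<and> \<omega> (t, a, i) = t'})) = real n"
      using card_fibers[of n "\<lambda>i. \<omega> (t, a, i)"] by (metis of_nat_sum)
    finally show ?thesis using n by simp
  qed
  then show ?thesis unfolding stoch_def emp_kernel_def by auto
qed

lemma stoch_absorb: "stoch Q \<Longrightarrow> stoch (absorb_kernel Q s)"
  unfolding stoch_def absorb_kernel_def
proof (intro conjI allI)
  fix t a assume Q: "(\<forall>t a t'. 0 \<le> Q t a t') \<and> (\<forall>t a. (\<Sum>t'\<in>UNIV. Q t a t') = 1)"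
  show "(\<Sum>t'\<in>UNIV. if t = s then if t' = s then 1 else 0 else Q t a t') = 1"
    by (cases "t = s") (use Q in auto)
next
  fix t a t' assume Q: "(\<forall>t a t'. 0 \<le> Q t a t') \<and> (\<forall>t a. (\<Sum>t'\<in>UNIV. Q t a t') = 1)"
  show "0 \<le> (if t = s then if t' = s then 1 else 0 else Q t a t')" using Q by auto
qed

lemma sum_Q_bound:
  assumes "stoch Q"
  shows "\<bar>\<Sum>t'\<in>UNIV. Q t a t' * z t'\<bar> \<le> supnorm z"
proof -
  have "\<bar>\<Sum>t'\<in>UNIV. Q t a t' * z t'\<bar> \<le> (\<Sum>t'\<in>UNIV. \<bar>Q t a t' * z t'\<bar>)" by (rule sum_abs)
  also have "\<dots> \<le> (\<Sum>t'\<in>UNIV. Q t a t' * supnorm z)"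
    using assms unfolding stoch_def
    by (intro sum_mono) (simp add: abs_mult mult_left_mono supnorm_ge)
  also have "\<dots> = supnorm z" using assms unfolding stoch_def by (simp add: sum_distrib_right[symmetric])
  finally show ?thesis .
qed

lemma sum_Q_lower:
  assumes "stoch Q" "\<And>t'. lo \<le> z t'"
  shows "lo \<le> (\<Sum>t'\<in>UNIV. Q t a t' * z t')"
proof -
  have "lo = (\<Sum>t'\<in>UNIV. Q t a t' * lo)" using assms unfolding stoch_def by (simp add: sum_distrib_right[symmetric])
  also have "\<dots> \<le> (\<Sum>t'\<in>UNIV. Q t a t' * z t')"
    using assms unfolding stoch_def by (intro sum_mono) (simp add: mult_left_mono)
  finally show ?thesis .
qed

lemma sum_Q_upper:
  assumes "stoch Q" "\<And>t'. z t' \<le> hi"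
  shows "(\<Sum>t'\<in>UNIV. Q t a t' * z t') \<le> hi"
proof -
  have "(\<Sum>t'\<in>UNIV. Q t a t' * z t') \<le> (\<Sum>t'\<in>UNIV. Q t a t' * hi)"
    using assms unfolding stoch_def by (intro sum_mono) (simp add: mult_left_mono)
  also have "\<dots> = hi" using assms unfolding stoch_def by (simp add: sum_distrib_right[symmetric])
  finally show ?thesis .
qed

lemma bellman_lip:
  assumes Q: "stoch Q" and g: "0 \<le> \<gamma>" and r: "\<And>a. \<bar>r1 t a - r2 t a\<bar> \<le> c"
  shows "\<bar>bellman r1 Q \<gamma> x t - bellman r2 Q \<gamma> y t\<bar> \<le> c + \<gamma> * supnorm (\<lambda>t. x t - y t)"
  unfolding bellman_def
proof (rule Max_diff_le)
  fix a
  have e: "(\<Sum>s''\<in>UNIV. Q t a s'' * x s'') - (\<Sum>s''\<in>UNIV. Q t a s'' * y s'')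
      = (\<Sum>s''\<in>UNIV. Q t a s'' * (x s'' - y s''))"
    by (simp add: sum_subtractf algebra_simps)
  have b: "\<bar>\<Sum>s''\<in>UNIV. Q t a s'' * (x s'' - y s'')\<bar> \<le> supnorm (\<lambda>t. x t - y t)"
    by (rule sum_Q_bound[OF Q])
  define X where "X = (\<Sum>s''\<in>UNIV. Q t a s'' * x s'')"
  define Y where "Y = (\<Sum>s''\<in>UNIV. Q t a s'' * y s'')"
  have bXY: "\<bar>X - Y\<bar> \<le> supnorm (\<lambda>t. x t - y t)" using b e unfolding X_def Y_def by simp
  have "r1 t a + \<gamma> * X - (r2 t a + \<gamma> * Y) = (r1 t a - r2 t a) + \<gamma> * (X - Y)"
    by (simp add: right_diff_distrib)
  then have "\<bar>r1 t a + \<gamma> * X - (r2 t a + \<gamma> * Y)\<bar> \<le> \<bar>r1 t a - r2 t a\<bar> + \<bar>\<gamma> * (X - Y)\<bar>"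
    using abs_triangle_ineq by metis
  also have "\<bar>\<gamma> * (X - Y)\<bar> = \<gamma> * \<bar>X - Y\<bar>" using g by (simp add: abs_mult)
  also have "\<gamma> * \<bar>X - Y\<bar> \<le> \<gamma> * supnorm (\<lambda>t. x t - y t)" using g bXY by (rule mult_left_mono[rotated])
  finally have "\<bar>r1 t a + \<gamma> * X - (r2 t a + \<gamma> * Y)\<bar> \<le> c + \<gamma> * supnorm (\<lambda>t. x t - y t)"
    using r[of a] by linarith
  then show "\<bar>r1 t a + \<gamma> * (\<Sum>s''\<in>UNIV. Q t a s'' * x s'') - (r2 t a + \<gamma> * (\<Sum>s''\<in>UNIV. Q t a s'' * y s''))\<bar>
      \<le> c + \<gamma> * supnorm (\<lambda>t. x t - y t)" unfolding X_def Y_def .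
qed

lemma clip_lip: "\<bar>clip M V t - clip M W t\<bar> \<le> supnorm (\<lambda>t. V t - W t)"
proof -
  have h1: "\<bar>V t - W t\<bar> \<le> supnorm (\<lambda>t. V t - W t)" by (rule supnorm_ge[of "\<lambda>t. V t - W t", simplified])
  have h2: "\<bar>(MIN t. V t) - (MIN t. W t)\<bar> \<le> supnorm (\<lambda>t. V t - W t)"
    by (rule Min_diff_le) (rule supnorm_ge[of "\<lambda>t. V t - W t", simplified])
  show ?thesis unfolding clip_def using h1 h2 by (simp add: min_def abs_le_iff)
qed

lemma G_contr:
  assumes "stoch Q" "0 \<le> \<gamma>"
  shows "\<bar>clip M (bellman r Q \<gamma> x) t - clip M (bellman r Q \<gamma> y) t\<bar> \<le> \<gamma> * supnorm (\<lambda>t. x t - y t)"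
proof -
  have "\<bar>clip M (bellman r Q \<gamma> x) t - clip M (bellman r Q \<gamma> y) t\<bar>
     \<le> supnorm (\<lambda>t. bellman r Q \<gamma> x t - bellman r Q \<gamma> y t)" by (rule clip_lip)
  also have "\<dots> \<le> \<gamma> * supnorm (\<lambda>t. x t - y t)"
  proof (rule supnorm_le)
    fix t'
    have "\<bar>bellman r Q \<gamma> x t' - bellman r Q \<gamma> y t'\<bar> \<le> 0 + \<gamma> * supnorm (\<lambda>t. x t - y t)"
      by (rule bellman_lip[OF assms]) simp
    then show "\<bar>bellman r Q \<gamma> x t' - bellman r Q \<gamma> y t'\<bar> \<le> \<gamma> * supnorm (\<lambda>t. x t - y t)" by simp
  qed
  finally show ?thesis .
qed

lemma cfix_ex1:
  assumes "stoch Q" "0 \<le> \<gamma>" "\<gamma> < 1"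
  shows "\<exists>!V. clip M (bellman r Q \<gamma> V) = V"
proof -
  have c: "\<And>x y t. \<bar>clip M (bellman r Q \<gamma> x) t - clip M (bellman r Q \<gamma> y) t\<bar> \<le> \<gamma> * supnorm (\<lambda>t. x t - y t)"
    by (rule G_contr[OF assms(1,2)])
  show ?thesis
  proof (rule ex_ex1I)
    show "\<exists>V. clip M (bellman r Q \<gamma> V) = V" by (rule contraction_exists[OF assms(2,3) c])
  next
    fix V W assume "clip M (bellman r Q \<gamma> V) = V" "clip M (bellman r Q \<gamma> W) = W"
    then show "V = W" by (rule contraction_unique[OF assms(2,3) c])
  qed
qed

lemma cfix_eq:
  assumes "stoch Q" "0 \<le> \<gamma>" "\<gamma> < 1"
  shows "clip M (bellman r Q \<gamma> (clipped_fix M (bellman r Q \<gamma>))) = clipped_fix M (bellman r Q \<gamma>)"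
proof -
  have "\<exists>!V. clip M (bellman r Q \<gamma> V) = V" by (rule cfix_ex1[OF assms])
  then have "clip M (bellman r Q \<gamma> (THE V. clip M (bellman r Q \<gamma> V) = V)) = (THE V. clip M (bellman r Q \<gamma> V) = V)"
    by (rule theI')
  then show ?thesis by (simp only: clipped_fix_def)
qed

lemma cfix_unique:
  assumes "stoch Q" "0 \<le> \<gamma>" "\<gamma> < 1" "clip M (bellman r Q \<gamma> V) = V"
  shows "clipped_fix M (bellman r Q \<gamma>) = V"
proof -
  have "\<exists>!V. clip M (bellman r Q \<gamma> V) = V" by (rule cfix_ex1[OF assms(1-3)])
  then have "(THE V. clip M (bellman r Q \<gamma> V) = V) = V"
    by (rule the1_equality) (rule assms(4))
  then show ?thesis by (simp only: clipped_fix_def)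
qed

lemma fix_lip:
  assumes Q: "stoch Q" and g: "0 \<le> \<gamma>" "\<gamma> < 1" and r: "\<And>t a. \<bar>r1 t a - r2 t a\<bar> \<le> c"
  shows "supnorm (\<lambda>t. clipped_fix M (bellman r1 Q \<gamma>) t - clipped_fix M (bellman r2 Q \<gamma>) t) \<le> c / (1 - \<gamma>)"
proof -
  define V1 where "V1 = clipped_fix M (bellman r1 Q \<gamma>)"
  define V2 where "V2 = clipped_fix M (bellman r2 Q \<gamma>)"
  have f1: "clip M (bellman r1 Q \<gamma> V1) = V1" unfolding V1_def by (rule cfix_eq[OF Q g])
  have f2: "clip M (bellman r2 Q \<gamma> V2) = V2" unfolding V2_def by (rule cfix_eq[OF Q g])
  let ?S = "supnorm (\<lambda>t. V1 t - V2 t)"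
  have "?S \<le> c + \<gamma> * ?S"
  proof (rule supnorm_le)
    fix t
    have "\<bar>V1 t - V2 t\<bar> = \<bar>clip M (bellman r1 Q \<gamma> V1) t - clip M (bellman r2 Q \<gamma> V2) t\<bar>"
      using f1 f2 by simp
    also have "\<dots> \<le> supnorm (\<lambda>t. bellman r1 Q \<gamma> V1 t - bellman r2 Q \<gamma> V2 t)" by (rule clip_lip)
    also have "\<dots> \<le> c + \<gamma> * ?S"
      by (rule supnorm_le) (rule bellman_lip[OF Q g(1) r])
    finally show "\<bar>V1 t - V2 t\<bar> \<le> c + \<gamma> * ?S" .
  qed
  moreover have "(1 - \<gamma>) * ?S = ?S - \<gamma> * ?S" by (simp add: left_diff_distrib)
  ultimately have "(1 - \<gamma>) * ?S \<le> c" by linarith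
  then have "?S * (1 - \<gamma>) \<le> c" by (simp add: mult.commute)
  then have "?S \<le> c / (1 - \<gamma>)" using g by (simp add: pos_le_divide_eq)
  then show ?thesis by (simp only: V1_def V2_def)
qed


lemma ex_argmin: fixes V :: "'s::finite \<Rightarrow> real" shows "\<exists>t0. \<forall>t. V t0 \<le> V t"
proof -
  have "Min (range V) \<in> range V" by (auto intro!: Min_in)
  then obtain t0 where t0: "Min (range V) = V t0" by (metis imageE)
  have "\<forall>t. Min (range V) \<le> V t" by (auto intro: Min_le)
  then show ?thesis using t0 by metis
qed

lemma ex_argmax: fixes V :: "'s::finite \<Rightarrow> real" shows "\<exists>t1. \<forall>t. V t \<le> V t1"
proof -
  have "Max (range V) \<in> range V" by (auto intro!: Max_in)
  then obtain t1 where t1: "Max (range V) = V t1" by (metis imageE)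
  have "\<forall>t. V t \<le> Max (range V)" by (auto intro: Max_ge)
  then show ?thesis using t1 by metis
qed

lemma ustar_range:
  assumes Q: "stoch Q" and r: "\<And>x b. 0 \<le> r x b \<and> r x b \<le> 1" and g: "0 < \<gamma>" "\<gamma> < 1" and M: "M > 0"
  and V: "clip M (bellman r Q \<gamma> V) = V"
  shows "0 \<le> bellman r Q \<gamma> V s - \<gamma> * V s \<and> bellman r Q \<gamma> V s - \<gamma> * V s \<le> 1"
proof -
  define T where "T = bellman r Q \<gamma> V"
  define mT where "mT = (MIN t. T t)"
  have Vt: "V t = min (T t) (M + mT)" for t
    using fun_cong[OF V, of t] unfolding clip_def T_def mT_def by simp
  obtain t0 where t0: "\<And>t. V t0 \<le> V t" using ex_argmin by blast
  obtain t1 where t1: "\<And>t. V t \<le> V t1" using ex_argmax by blast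
  have Tlow: "\<gamma> * V t0 \<le> T t" for t
  proof -
    have "V t0 \<le> (\<Sum>t'\<in>UNIV. Q t undefined t' * V t')" by (rule sum_Q_lower[OF Q t0])
    then have "\<gamma> * V t0 \<le> \<gamma> * (\<Sum>t'\<in>UNIV. Q t undefined t' * V t')" using g by simp
    also have "\<dots> \<le> r t undefined + \<gamma> * (\<Sum>t'\<in>UNIV. Q t undefined t' * V t')" using r by simp
    also have "\<dots> \<le> T t" unfolding T_def bellman_def by (rule Max_ge) auto
    finally show ?thesis .
  qed
  have Tup: "T t \<le> 1 + \<gamma> * V t1" for t
  proof -
    have "r t a + \<gamma> * (\<Sum>t'\<in>UNIV. Q t a t' * V t') \<le> 1 + \<gamma> * V t1" for a
    proof -
      have "(\<Sum>t'\<in>UNIV. Q t a t' * V t') \<le> V t1" by (rule sum_Q_upper[OF Q t1])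
      then have "\<gamma> * (\<Sum>t'\<in>UNIV. Q t a t' * V t') \<le> \<gamma> * V t1" using g by simp
      then show ?thesis using r[of t a] by linarith
    qed
    then show ?thesis unfolding T_def bellman_def by (simp add: Max_le_iff)
  qed
  have "mT \<in> range T" unfolding mT_def by (auto intro!: Min_in)
  then obtain t' where mt: "mT = T t'" by auto
  have "\<gamma> * V t0 \<le> V t0" using Vt[of t0] Tlow[of t0] Tlow[of t'] mt M by simp
  then have "(1 - \<gamma>) * V t0 \<ge> 0" by (simp add: left_diff_distrib)
  then have "V t0 \<ge> 0" using g by (simp add: zero_le_mult_iff)
  then have Vnn: "0 \<le> V t" for t using t0[of t] by linarith
  have VT: "V t \<le> T t" for t using Vt[of t] by simp
  have VM: "V t \<le> M + mT" for t using Vt[of t] by simp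
  have "V t1 \<le> 1 + \<gamma> * V t1" using VT[of t1] Tup[of t1] by linarith
  then have V1: "(1 - \<gamma>) * V t1 \<le> 1" by (simp add: left_diff_distrib)
  have "\<gamma> * V s \<le> 1 * V s" using g Vnn[of s] by (intro mult_right_mono) auto
  then have low: "0 \<le> T s - \<gamma> * V s" using VT[of s] by linarith
  have up: "T s - \<gamma> * V s \<le> 1"
  proof (cases "V s = T s")
    case True
    have a: "(1 - \<gamma>) * T s \<le> (1 - \<gamma>) * (1 + \<gamma> * V t1)" using g Tup[of s] by (intro mult_left_mono) auto
    have b: "\<gamma> * ((1 - \<gamma>) * V t1) \<le> \<gamma> * 1" using g V1 by (intro mult_left_mono) auto
    have c: "(1 - \<gamma>) * (1 + \<gamma> * V t1) = (1 - \<gamma>) + \<gamma> * ((1 - \<gamma>) * V t1)" by (simp add: algebra_simps)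
    have d: "T s - \<gamma> * V s = (1 - \<gamma>) * T s" using True by (simp add: left_diff_distrib)
    show ?thesis using a b c d by linarith
  next
    case False
    then have "V s = M + mT" using Vt[of s] by (simp add: min_def split: if_splits)
    then have "V t1 \<le> V s" using VM[of t1] by simp
    then have "\<gamma> * V t1 \<le> \<gamma> * V s" using g by simp
    then show ?thesis using Tup[of s] by linarith
  qed
  show ?thesis using low up unfolding T_def by simp
qed

lemma ustar_op:
  assumes u: "u = bellman r Q \<gamma> V s - \<gamma> * V s"
  shows "bellman (mod_reward r s u) (absorb_kernel Q s) \<gamma> V = bellman r Q \<gamma> V"
proof (rule ext)
  fix t
  show "bellman (mod_reward r s u) (absorb_kernel Q s) \<gamma> V t = bellman r Q \<gamma> V t"
  proof (cases "t = s")
    case True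
    have k: "absorb_kernel Q s s a t' * V t' = (if t' = s then V s else 0)" for a t'
      by (simp add: absorb_kernel_def)
    have sm: "(\<Sum>t'\<in>UNIV. absorb_kernel Q s s a t' * V t') = V s" for a
      by (simp add: k)
    have "bellman (mod_reward r s u) (absorb_kernel Q s) \<gamma> V t = (MAX a::'b. u + \<gamma> * V s)"
      unfolding bellman_def using True sm by (simp add: mod_reward_def)
    also have "\<dots> = u + \<gamma> * V s" by simp
    finally show ?thesis using u True by simp
  next
    case False
    then show ?thesis unfolding bellman_def mod_reward_def absorb_kernel_def by simp
  qed
qed

lemma part_ii:
  assumes Q: "stoch Q" and r: "\<And>x b. 0 \<le> r x b \<and> r x b \<le> 1" and g: "0 < \<gamma>" "\<gamma> < 1" and M: "M > 0"
  defines "V \<equiv> clipped_fix M (bellman r Q \<gamma>)"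
  shows "bellman r Q \<gamma> V s - \<gamma> * V s \<in> {0..1} \<and>
    clipped_fix M (bellman (mod_reward r s (bellman r Q \<gamma> V s - \<gamma> * V s)) (absorb_kernel Q s) \<gamma>) = V"
proof -
  have fp: "clip M (bellman r Q \<gamma> V) = V" unfolding V_def by (rule cfix_eq[OF Q]) (use g in auto)
  have "bellman r Q \<gamma> V s - \<gamma> * V s \<in> {0..1}" using ustar_range[OF Q r g M fp] by simp
  moreover have "clipped_fix M (bellman (mod_reward r s (bellman r Q \<gamma> V s - \<gamma> * V s)) (absorb_kernel Q s) \<gamma>) = V"
  proof (rule cfix_unique[OF stoch_absorb[OF Q]])
    have "bellman (mod_reward r s (bellman r Q \<gamma> V s - \<gamma> * V s)) (absorb_kernel Q s) \<gamma> V = bellman r Q \<gamma> V"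
      by (rule ustar_op) (rule refl)
    then show "clip M (bellman (mod_reward r s (bellman r Q \<gamma> V s - \<gamma> * V s)) (absorb_kernel Q s) \<gamma> V) = V"
      using fp by simp
  qed (use g in auto)
  ultimately show ?thesis by blast
qed

lemma part_i:
  assumes Q: "stoch Q" and g: "0 \<le> \<gamma>" "\<gamma> < 1"
  shows "supnorm (\<lambda>t. clipped_fix M (bellman (mod_reward r s u) (absorb_kernel Q s) \<gamma>) t
       - clipped_fix M (bellman (mod_reward r s u') (absorb_kernel Q s) \<gamma>) t) \<le> \<bar>u - u'\<bar> / (1 - \<gamma>)"
  by (rule fix_lip[OF stoch_absorb[OF Q] g]) (simp add: mod_reward_def)

lemma grid_point:
  fixes N :: nat and u :: real
  assumes N: "N > 0" and u: "0 \<le> u" "u \<le> 1"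
  shows "\<exists>k<N. \<bar>u - (2 * real k + 1) / (2 * real N)\<bar> \<le> 1 / (2 * real N)"
proof -
  have "\<exists>k<N. real k \<le> u * real N \<and> u * real N \<le> real k + 1"
  proof (cases "u < 1")
    case True
    define k where "k = nat \<lfloor>u * real N\<rfloor>"
    have nn: "0 \<le> u * real N" using u by simp
    then have rk: "real k = of_int \<lfloor>u * real N\<rfloor>" unfolding k_def by simp
    have "u * real N < real N" using True N by simp
    then have fl: "\<lfloor>u * real N\<rfloor> < int N" by (simp add: floor_less_iff)
    have "0 \<le> \<lfloor>u * real N\<rfloor>" using nn by simp
    then have "k < N" unfolding k_def using fl by (simp add: nat_less_iff)
    moreover have "real k \<le> u * real N" using rk by simp
    moreover have "u * real N \<le> real k + 1" using rk by linarith
    ultimately show ?thesis by blast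
  next
    case False
    then have "u = 1" using u by simp
    then show ?thesis using N by (intro exI[of _ "N - 1"]) (auto simp: of_nat_diff)
  qed
  then obtain k where k: "k < N" "real k \<le> u * real N" "u * real N \<le> real k + 1" by blast
  have Np: "0 < real N" using N by simp
  have e1: "(2 * real k + 1) / (2 * real N) - 1 / (2 * real N) = real k / real N"
    using Np by (simp add: field_simps)
  have e2: "(2 * real k + 1) / (2 * real N) + 1 / (2 * real N) = (real k + 1) / real N"
    using Np by (simp add: field_simps)
  have l: "real k / real N \<le> u" using k(2) Np by (simp add: pos_divide_le_eq mult.commute)
  have h: "u \<le> (real k + 1) / real N" using k(3) Np by (simp add: pos_le_divide_eq mult.commute)
  define a where "a = (2 * real k + 1) / (2 * real N)"
  define b where "b = 1 / (2 * real N)"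
  define lo where "lo = real k / real N"
  define hi where "hi = (real k + 1) / real N"
  have "a - b = lo" "a + b = hi" "lo \<le> u" "u \<le> hi" using e1 e2 l h unfolding a_def b_def lo_def hi_def by auto
  then have "\<bar>u - a\<bar> \<le> b" by linarith
  then show ?thesis using k(1) unfolding a_def b_def by blast
qed

lemma grid:
  fixes \<gamma> \<epsilon> :: real
  assumes g: "\<gamma> < 1" and e: "\<epsilon> > 0"
  shows "\<exists>U. finite U \<and> U \<subseteq> {0..1} \<and> card U = nat \<lceil>1 / (2 * (1 - \<gamma>) * \<epsilon>)\<rceil> \<and>
     (\<forall>u\<in>{0..1}. \<exists>v\<in>U. \<bar>u - v\<bar> \<le> (1 - \<gamma>) * \<epsilon>)"
proof -
  define c where "c = 2 * (1 - \<gamma>) * \<epsilon>"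
  have c: "c > 0" unfolding c_def using g e by simp
  define N where "N = nat \<lceil>1 / c\<rceil>"
  have NN: "real N \<ge> 1 / c" unfolding N_def by linarith
  have N0: "N > 0" unfolding N_def using c by simp
  have Np: "0 < real N" using N0 by simp
  define U where "U = (\<lambda>k. (2 * real k + 1) / (2 * real N)) ` {..<N}"
  have inj: "inj_on (\<lambda>k. (2 * real k + 1) / (2 * real N)) {..<N}"
    using Np by (auto simp: inj_on_def)
  have card: "card U = N" unfolding U_def by (simp add: card_image[OF inj])
  have sub: "U \<subseteq> {0..1}"
  proof
    fix v assume "v \<in> U"
    then obtain k where k: "k < N" "v = (2 * real k + 1) / (2 * real N)" unfolding U_def by auto
    have "2 * real k + 1 \<le> 2 * real N" using k(1) by linarith
    then show "v \<in> {0..1}" using k Np by (simp add: divide_le_eq_1)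
  qed
  have "1 / (2 * real N) \<le> (1 - \<gamma>) * \<epsilon>"
  proof -
    have "1 \<le> real N * c" using NN c by (simp add: divide_le_eq mult.commute)
    then have "1 \<le> (2 * real N) * ((1 - \<gamma>) * \<epsilon>)" unfolding c_def by (simp add: algebra_simps)
    then show ?thesis using Np by (simp add: divide_le_eq mult.commute)
  qed
  note b = this
  have appr: "\<forall>u\<in>{0..1}. \<exists>v\<in>U. \<bar>u - v\<bar> \<le> (1 - \<gamma>) * \<epsilon>"
  proof (intro ballI)
    fix u :: real assume "u \<in> {0..1}"
    then obtain k where k: "k < N" "\<bar>u - (2 * real k + 1) / (2 * real N)\<bar> \<le> 1 / (2 * real N)"
      using grid_point[OF N0] by auto
    have "(2 * real k + 1) / (2 * real N) \<in> U" unfolding U_def using k(1) by auto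
    then show "\<exists>v\<in>U. \<bar>u - v\<bar> \<le> (1 - \<gamma>) * \<epsilon>" using k(2) b by force
  qed
  have fin: "finite U" unfolding U_def by simp
  have "card U = nat \<lceil>1 / (2 * (1 - \<gamma>) * \<epsilon>)\<rceil>" using card unfolding N_def c_def .
  then show ?thesis using fin sub appr by blast
qed

lemma indep:
  fixes P :: "'s::finite \<Rightarrow> 'a::finite \<Rightarrow> 's pmf" and F :: "('s \<times> 'a \<times> nat \<Rightarrow> 's) \<Rightarrow> 'c"
  assumes F: "\<And>\<omega> \<omega>'. (\<And>s'' a i. s'' \<noteq> s \<Longrightarrow> \<omega> (s'', a, i) = \<omega>' (s'', a, i)) \<Longrightarrow> F \<omega> = F \<omega>'"
  shows "map_pmf (\<lambda>\<omega>. (F \<omega>, map (\<lambda>i. \<omega> (s, a, i)) [0..<n])) (samples_pmf n P)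
       = pair_pmf (map_pmf F (samples_pmf n P)) (map_pmf (\<lambda>\<omega>. map (\<lambda>i. \<omega> (s, a, i)) [0..<n]) (samples_pmf n P))"
proof -
  define I where "I = {(s'::'s, a'::'a, i). i < n}"
  define A where "A = {x \<in> I. fst x = s}"
  define B where "B = I - A"
  define p where "p = (\<lambda>(s::'s, a::'a, i::nat). P s a)"
  define G where "G = (\<lambda>\<omega>::'s \<times> 'a \<times> nat \<Rightarrow> 's. map (\<lambda>i. \<omega> (s, a, i)) [0..<n])"
  have "I = UNIV \<times> UNIV \<times> {..<n}" unfolding I_def by auto
  then have fI: "finite I" by simp
  have fA: "finite A" "finite B" unfolding A_def B_def using fI by auto
  have AB: "A \<inter> B = {}" "A \<union> B = I" unfolding A_def B_def by auto
  define h where "h = (\<lambda>(f::'s \<times> 'a \<times> nat \<Rightarrow> 's, g::'s \<times> 'a \<times> nat \<Rightarrow> 's) x. if x \<in> A then f x else g x)"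
  define PP where "PP = pair_pmf (Pi_pmf A undefined p) (Pi_pmf B undefined p)"
  have S: "samples_pmf n P = map_pmf h PP"
    unfolding samples_pmf_def I_def[symmetric] p_def[symmetric] h_def PP_def
    using Pi_pmf_union[OF fA AB(1), of undefined p] AB(2) by simp
  have hF: "F (h (f, g)) = F g" for f g
    by (rule F) (auto simp: h_def A_def)
  have hG: "G (h (f, g)) = G f" for f g
    unfolding G_def h_def by (auto simp: A_def I_def)
  have "map_pmf (\<lambda>\<omega>. (F \<omega>, G \<omega>)) (samples_pmf n P) = map_pmf (\<lambda>(f, g). (F g, G f)) PP"
    unfolding S map_pmf_comp by (intro map_pmf_cong refl) (auto simp: hF hG)
  also have "\<dots> = map_pmf (\<lambda>(x, y). (F x, G y)) (pair_pmf (Pi_pmf B undefined p) (Pi_pmf A undefined p))"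
    unfolding PP_def by (subst pair_commute_pmf) (simp add: map_pmf_comp case_prod_unfold)
  also have "\<dots> = pair_pmf (map_pmf F (Pi_pmf B undefined p)) (map_pmf G (Pi_pmf A undefined p))"
    by (rule map_pair)
  also have "map_pmf F (Pi_pmf B undefined p) = map_pmf F (samples_pmf n P)"
  proof -
    have "map_pmf F (samples_pmf n P) = map_pmf (\<lambda>x. F (snd x)) PP"
      unfolding S map_pmf_comp by (intro map_pmf_cong refl) (auto simp: hF)
    also have "\<dots> = map_pmf F (map_pmf snd PP)" by (simp add: map_pmf_comp)
    finally show ?thesis unfolding PP_def map_snd_pair_pmf by simp
  qed
  also have "map_pmf G (Pi_pmf A undefined p) = map_pmf G (samples_pmf n P)"
  proof -
    have "map_pmf G (samples_pmf n P) = map_pmf (\<lambda>x. G (fst x)) PP"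
      unfolding S map_pmf_comp by (intro map_pmf_cong refl) (auto simp: hG)
    also have "\<dots> = map_pmf G (map_pmf fst PP)" by (simp add: map_pmf_comp)
    finally show ?thesis unfolding PP_def map_fst_pair_pmf by simp
  qed
  finally show ?thesis unfolding G_def .
qed

theorem lemma20:
  fixes P :: "'s::finite \<Rightarrow> 'a::finite \<Rightarrow> 's pmf"
    and r :: "'s \<Rightarrow> 'a \<Rightarrow> real"
    and \<gamma> M :: real and n :: nat and s :: 's
  assumes r_range: "\<And>x b. 0 \<le> r x b \<and> r x b \<le> 1"
    and gamma: "0 < \<gamma>" "\<gamma> < 1"
    and M: "M > 0"
    and n: "n > 0"
  shows
    "(\<forall>\<omega> u u'. u \<in> {0..1} \<longrightarrow> u' \<in> {0..1} \<longrightarrow>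
        supnorm (\<lambda>x. V_su n r \<gamma> M \<omega> s u x - V_su n r \<gamma> M \<omega> s u' x) \<le> \<bar>u - u'\<bar> / (1 - \<gamma>))
   \<and> (\<forall>\<omega>. let ustar = bellman r (emp_kernel n \<omega>) \<gamma> (V_star n r \<gamma> M \<omega>) s
                       - \<gamma> * V_star n r \<gamma> M \<omega> s
          in ustar \<in> {0..1} \<and> V_su n r \<gamma> M \<omega> s ustar = V_star n r \<gamma> M \<omega>)
   \<and> (\<forall>\<epsilon>>0. \<exists>U. finite U \<and> U \<subseteq> {0..1} \<and> card U = nat \<lceil>1 / (2 * (1 - \<gamma>) * \<epsilon>)\<rceil> \<and>
        (AE \<omega> in measure_pmf (samples_pmf n P).
           \<forall>s'. \<exists>u\<in>U. supnorm (\<lambda>x. V_star n r \<gamma> M \<omega> x - V_su n r \<gamma> M \<omega> s' u x) \<le> \<epsilon>))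
   \<and> (\<forall>u\<in>{0..1}. \<forall>a.
        map_pmf (\<lambda>\<omega>. (V_su n r \<gamma> M \<omega> s u, map (\<lambda>i. \<omega> (s, a, i)) [0..<n])) (samples_pmf n P)
        = pair_pmf (map_pmf (\<lambda>\<omega>. V_su n r \<gamma> M \<omega> s u) (samples_pmf n P))
                   (map_pmf (\<lambda>\<omega>. map (\<lambda>i. \<omega> (s, a, i)) [0..<n]) (samples_pmf n P)))"
proof -
  have Q: "stoch (emp_kernel n \<omega>)" for \<omega> using n by (rule stoch_emp)
  have g0: "0 \<le> \<gamma>" using gamma by simp
  have P1: "supnorm (\<lambda>x. V_su n r \<gamma> M \<omega> s' u x - V_su n r \<gamma> M \<omega> s' u' x) \<le> \<bar>u - u'\<bar> / (1 - \<gamma>)"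
    for \<omega> s' u u'
    unfolding V_su_def by (rule part_i[OF Q g0 gamma(2)])
  have P2: "bellman r (emp_kernel n \<omega>) \<gamma> (V_star n r \<gamma> M \<omega>) s' - \<gamma> * V_star n r \<gamma> M \<omega> s' \<in> {0..1} \<and>
      V_su n r \<gamma> M \<omega> s' (bellman r (emp_kernel n \<omega>) \<gamma> (V_star n r \<gamma> M \<omega>) s' - \<gamma> * V_star n r \<gamma> M \<omega> s')
       = V_star n r \<gamma> M \<omega>" for \<omega> s'
    unfolding V_su_def V_star_def by (rule part_ii[OF Q r_range gamma M])
  have P3: "\<exists>U. finite U \<and> U \<subseteq> {0..1} \<and> card U = nat \<lceil>1 / (2 * (1 - \<gamma>) * \<epsilon>)\<rceil> \<and>
        (AE \<omega> in measure_pmf (samples_pmf n P).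
           \<forall>s'. \<exists>u\<in>U. supnorm (\<lambda>x. V_star n r \<gamma> M \<omega> x - V_su n r \<gamma> M \<omega> s' u x) \<le> \<epsilon>)"
    if e: "\<epsilon> > 0" for \<epsilon>
  proof -
    obtain U where U: "finite U" "U \<subseteq> {0..1}" "card U = nat \<lceil>1 / (2 * (1 - \<gamma>) * \<epsilon>)\<rceil>"
      "\<forall>u\<in>{0..1}. \<exists>v\<in>U. \<bar>u - v\<bar> \<le> (1 - \<gamma>) * \<epsilon>"
      using grid[OF gamma(2) e] by blast
    have "\<exists>u\<in>U. supnorm (\<lambda>x. V_star n r \<gamma> M \<omega> x - V_su n r \<gamma> M \<omega> s' u x) \<le> \<epsilon>" for \<omega> s'
    proof -
      define us where "us = bellman r (emp_kernel n \<omega>) \<gamma> (V_star n r \<gamma> M \<omega>) s' - \<gamma> * V_star n r \<gamma> M \<omega> s'"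
      have us: "us \<in> {0..1}" "V_su n r \<gamma> M \<omega> s' us = V_star n r \<gamma> M \<omega>"
        using P2[of \<omega> s'] unfolding us_def by auto
      obtain v where v: "v \<in> U" "\<bar>us - v\<bar> \<le> (1 - \<gamma>) * \<epsilon>" using U(4) us(1) by blast
      have "supnorm (\<lambda>x. V_su n r \<gamma> M \<omega> s' us x - V_su n r \<gamma> M \<omega> s' v x) \<le> \<bar>us - v\<bar> / (1 - \<gamma>)"
        by (rule P1)
      also have "\<dots> \<le> \<epsilon>" using v(2) gamma by (simp add: divide_le_eq mult.commute)
      finally show ?thesis using v(1) us(2) by auto
    qed
    then show ?thesis using U(1-3) by (intro exI[of _ U]) (auto intro!: AE_I2)
  qed
  have P4: "map_pmf (\<lambda>\<omega>. (V_su n r \<gamma> M \<omega> s u, map (\<lambda>i. \<omega> (s, a, i)) [0..<n])) (samples_pmf n P)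
        = pair_pmf (map_pmf (\<lambda>\<omega>. V_su n r \<gamma> M \<omega> s u) (samples_pmf n P))
                   (map_pmf (\<lambda>\<omega>. map (\<lambda>i. \<omega> (s, a, i)) [0..<n]) (samples_pmf n P))" for u a
  proof (rule indep)
    fix \<omega> \<omega>' :: "'s \<times> 'a \<times> nat \<Rightarrow> 's"
    assume h: "\<And>s'' a i. s'' \<noteq> s \<Longrightarrow> \<omega> (s'', a, i) = \<omega>' (s'', a, i)"
    have "absorb_kernel (emp_kernel n \<omega>) s = absorb_kernel (emp_kernel n \<omega>') s"
      unfolding absorb_kernel_def emp_kernel_def using h by (auto simp: fun_eq_iff)
    then show "V_su n r \<gamma> M \<omega> s u = V_su n r \<gamma> M \<omega>' s u" unfolding V_su_def by simp
  qed
  show ?thesis using P1 P2 P3 P4 by (simp add: Let_def)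
qed

end
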